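(* For every positive integer $n$ and every $\beta\ge 0$, there is a temporal graph $G$ on $n$ vertices and a source vertex $s$ of $G$ such that every single-source temporal $\beta$-additive spanner of $G$ with respect to $s$ has size $\Omega\big(\frac{n^2}{1+\beta}\big)$.
   Context: A temporal graph is an undirected graph $G=(V,E)$ with a labeling $\lambda:E\to\mathbb{N}^+$. A temporal path is a path whose traversed edges have non-decreasing labels in the order of traversal; its length is its number of edges, and $d_G(u,v)$ is the minimum length of a temporal path from $u$ to $v$ in $G$ ($+\infty$ if none). A single-source temporal $\beta$-additive spanner of $G$ w.r.t. $s$ is a subgraph $H$ with $V(H)=V$, $E(H)\subseteq E$ (same labels), such that $d_H(s,v)\le d_G(s,v)+\beta$ for every $v\in V$. Its size is its number of edges. *)

theory Defs
  imports Main "HOL-Library.Extended_Nat"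
begin

definition temporal_graph :: "nat \<Rightarrow> nat set set \<Rightarrow> (nat set \<Rightarrow> nat) \<Rightarrow> bool" where
  "temporal_graph n E lam \<longleftrightarrow>
     (\<forall>e\<in>E. \<exists>u v. e = {u, v} \<and> u \<noteq> v \<and> u < n \<and> v < n) \<and>
     (\<forall>e\<in>E. lam e > 0)"

definition temporal_path :: "nat set set \<Rightarrow> (nat set \<Rightarrow> nat) \<Rightarrow> nat list \<Rightarrow> bool" where
  "temporal_path E lam p \<longleftrightarrow>
     p \<noteq> [] \<and> distinct p \<and>
     (\<forall>i. Suc i < length p \<longrightarrow> {p ! i, p ! Suc i} \<in> E) \<and>
     (\<forall>i. i + 2 < length p \<longrightarrow> lam {p ! i, p ! Suc i} \<le> lam {p ! Suc i, p ! (i + 2)})"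

definition tdist :: "nat set set \<Rightarrow> (nat set \<Rightarrow> nat) \<Rightarrow> nat \<Rightarrow> nat \<Rightarrow> enat" where
  "tdist E lam u v =
     (INF p \<in> {p. temporal_path E lam p \<and> hd p = u \<and> last p = v}. enat (length p - 1))"

definition additive_spanner ::
  "nat \<Rightarrow> nat set set \<Rightarrow> (nat set \<Rightarrow> nat) \<Rightarrow> nat \<Rightarrow> real \<Rightarrow> nat set set \<Rightarrow> bool" where
  "additive_spanner n E lam s \<beta> H \<longleftrightarrow>
     H \<subseteq> E \<and>
     (\<forall>v<n. tdist E lam s v = \<infinity> \<or>
        (\<exists>k. tdist H lam s v = enat k \<and>
             real k \<le> real (the_enat (tdist E lam s v)) + \<beta>))"

end

theory Submission
  imports Defs
begin


lemma lex_le: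
  fixes w1 w2 m1 m2 M :: nat
  assumes "w1*M+m1+1 \<le> w2*M+m2+1" "m1 < M" "m2 < M"
  shows "w1 < w2 \<or> (w1 = w2 \<and> m1 \<le> m2)"
proof (rule ccontr)
  assume "\<not> ?thesis"
  hence "w2 < w1 \<or> (w1 = w2 \<and> m2 < m1)" by auto
  thus False
  proof
    assume "w2 < w1"
    hence "(w2+1)*M \<le> w1*M" by (intro mult_le_mono1) simp
    thus False using assms by simp
  next
    assume "w1 = w2 \<and> m2 < m1" thus False using assms by simp
  qed
qed

lemma tp_edge: "temporal_path H lam p \<Longrightarrow> Suc i < length p \<Longrightarrow> {p ! i, p ! Suc i} \<in> H"
  unfolding temporal_path_def by blast
lemma tp_lab: "temporal_path H lam p \<Longrightarrow> i + 2 < length p \<Longrightarrow> lam {p ! i, p ! Suc i} \<le> lam {p ! Suc i, p ! (i + 2)}"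
  unfolding temporal_path_def by blast
lemma tp_dist: "temporal_path H lam p \<Longrightarrow> distinct p"
  unfolding temporal_path_def by blast
lemma tp_ne: "temporal_path H lam p \<Longrightarrow> i < length p \<Longrightarrow> j < length p \<Longrightarrow> i \<noteq> j \<Longrightarrow> p ! i \<noteq> p ! j"
  unfolding temporal_path_def using nth_eq_iff_index_eq by blast

lemma tp_nil: "temporal_path H lam p \<Longrightarrow> p \<noteq> []"
  unfolding temporal_path_def by blast

locale fam =
  fixes n W M D s :: nat and P :: "nat \<Rightarrow> nat list" and lam :: "nat set \<Rightarrow> nat"
  assumes Wpos: "0 < W"
  and len: "\<And>w. w < W \<Longrightarrow> 2 \<le> length (P w) \<and> length (P w) \<le> M"
  and start: "\<And>w. w < W \<Longrightarrow> P w ! 0 = s"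
  and dist: "\<And>w. w < W \<Longrightarrow> distinct (P w)"
  and bound: "\<And>w. w < W \<Longrightarrow> set (P w) \<subseteq> {..<n}"
  and tpriv: "\<And>w w'. w < W \<Longrightarrow> w' < W \<Longrightarrow> w \<noteq> w' \<Longrightarrow> last (P w) \<notin> set (P w')"
  and key: "\<And>w w2 i i2. w < w2 \<Longrightarrow> w2 < W \<Longrightarrow> i < length (P w) \<Longrightarrow> i2 < length (P w2)
              \<Longrightarrow> P w ! i = P w2 ! i2 \<Longrightarrow> i \<noteq> 0 \<Longrightarrow> i2 + D \<le> i"
  and lam_eq: "\<And>w m. w < W \<Longrightarrow> Suc m < length (P w) \<Longrightarrow> lam {P w ! m, P w ! Suc m} = w*M+m+1"
  and lam_pos: "\<And>e. 0 < lam e"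
begin

definition EE :: "nat set set" where
  "EE = {e. \<exists>w<W. \<exists>m. Suc m < length (P w) \<and> e = {P w ! m, P w ! Suc m}}"

lemma distP: "w < W \<Longrightarrow> a < length (P w) \<Longrightarrow> b < length (P w) \<Longrightarrow> P w ! a = P w ! b \<longleftrightarrow> a = b"
  using dist nth_eq_iff_index_eq by blast

lemma Pne: "w < W \<Longrightarrow> P w \<noteq> []"
  using len[of w] by (cases "P w") auto

lemma claim:
  assumes tp: "temporal_path H lam p" and HE: "H \<subseteq> EE" and p0: "p ! 0 = s"
  shows "Suc j < length p \<Longrightarrow> w < W \<Longrightarrow> Suc m < length (P w) \<Longrightarrow>
     {p ! j, p ! Suc j} = {P w ! m, P w ! Suc m} \<Longrightarrow>
     (Suc j < length (P w) \<and> (\<forall>l\<le>Suc j. p ! l = P w ! l)) \<or>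
     (\<forall>k<length (P w). p ! Suc j = P w ! k \<longrightarrow> k + D \<le> Suc j)"
proof (induction j arbitrary: w m)
  case 0
  have l0: "0 < length p" using Suc_lessD[OF 0(1)] .
  have "p ! Suc 0 \<noteq> p ! 0" using tp_ne[OF tp, of "Suc 0" 0] 0(1) l0 by simp
  hence n1: "p ! Suc 0 \<noteq> s" using p0 by simp
  have e: "{s, p ! Suc 0} = {P w ! m, P w ! Suc m}" using p0 0(4) by simp
  hence "s \<in> {P w ! m, P w ! Suc m}" by blast
  hence "P w ! 0 = P w ! m \<or> P w ! 0 = P w ! Suc m" using start[OF 0(2)] by auto
  hence "m = 0"
  proof
    assume "P w ! 0 = P w ! m" thus ?thesis using distP[OF 0(2), of 0 m] 0(3) Pne[OF 0(2)] by simp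
  next
    assume "P w ! 0 = P w ! Suc m" thus ?thesis using distP[OF 0(2), of 0 "Suc m"] 0(3) Pne[OF 0(2)] by simp
  qed
  from e have "{s, p ! Suc 0} = {s, P w ! Suc 0}" by (simp add: `m = 0` start[OF 0(2)])
  hence p1: "p ! Suc 0 = P w ! Suc 0" using n1 by (simp add: doubleton_eq_iff)
  have "\<forall>l\<le>Suc 0. p ! l = P w ! l"
  proof (intro allI impI)
    fix l assume "l \<le> Suc 0"
    hence "l = 0 \<or> l = Suc 0" by auto
    thus "p ! l = P w ! l" using p1 p0 start[OF 0(2)] by auto
  qed
  moreover have "Suc 0 < length (P w)" using 0(3) `m = 0` by simp
  ultimately show ?case by blast
next
  case (Suc j)
  have eH: "{p ! j, p ! Suc j} \<in> H" using tp_edge[OF tp] Suc(2) by simp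
  then obtain w1 m1 where w1: "w1 < W" "Suc m1 < length (P w1)" "{p ! j, p ! Suc j} = {P w1 ! m1, P w1 ! Suc m1}"
    using HE unfolding EE_def by blast
  note IH = Suc(1)[OF _ w1]
  have lab: "lam {p ! j, p ! Suc j} \<le> lam {p ! Suc j, p ! (j+2)}"
    using tp_lab[OF tp] Suc(2) by simp
  moreover have "lam {p ! j, p ! Suc j} = w1*M+m1+1" unfolding w1(3) using lam_eq[OF w1(1,2)] .
  moreover have "lam {p ! Suc j, p ! (j+2)} = w*M+m+1" using Suc(5) lam_eq[OF Suc(3,4)] by (simp add: numeral_2_eq_2)
  ultimately have "w1*M+m1+1 \<le> w*M+m+1" by simp
  moreover have "m1 < M" using len[OF w1(1)] w1(2) by simp
  moreover have "m < M" using len[OF Suc(3)] Suc(4) by simp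
  ultimately have lx: "w1 < w \<or> (w1 = w \<and> m1 \<le> m)" using lex_le by blast
  have ne01: "p ! j \<noteq> p ! Suc j" using tp_ne[OF tp, of j "Suc j"] Suc(2) by simp
  have ne12: "p ! Suc j \<noteq> p ! Suc (Suc j)" using tp_ne[OF tp, of "Suc j" "Suc (Suc j)"] Suc(2) by simp
  have ne02: "p ! j \<noteq> p ! Suc (Suc j)" using tp_ne[OF tp, of j "Suc (Suc j)"] Suc(2) by simp
  have ns: "p ! Suc j \<noteq> s" using tp_ne[OF tp, of "Suc j" 0] Suc(2) p0 tp_nil[OF tp] by simp
  have IH': "(Suc j < length (P w1) \<and> (\<forall>l\<le>Suc j. p ! l = P w1 ! l)) \<or>
     (\<forall>k<length (P w1). p ! Suc j = P w1 ! k \<longrightarrow> k + D \<le> Suc j)" using IH Suc(2) by simp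
  from lx show ?case
  proof
    assume eq: "w1 = w \<and> m1 \<le> m"
    hence [simp]: "w1 = w" by simp
    have "m1 \<noteq> m" using w1(3) Suc(5) ne02 eq by (auto simp: doubleton_eq_iff)
    hence lt: "m1 < m" using eq by simp
    have x1a: "p ! Suc j = P w ! m1 \<or> p ! Suc j = P w ! Suc m1" using w1(3) by (auto simp: doubleton_eq_iff)
    have x1b: "p ! Suc j = P w ! m \<or> p ! Suc j = P w ! Suc m" using Suc(5) by (auto simp: doubleton_eq_iff)
    have l1: "Suc m1 < length (P w)" using w1(2) by simp
    have d: "\<And>a b. a < length (P w) \<Longrightarrow> b < length (P w) \<Longrightarrow> P w ! a = P w ! b \<Longrightarrow> a = b"
      using distP[OF Suc(3)] by blast
    have x1: "p ! Suc j = P w ! Suc m1"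
    proof (rule ccontr)
      assume "\<not> ?thesis"
      hence "P w ! m1 = P w ! m \<or> P w ! m1 = P w ! Suc m" using x1a x1b by auto
      thus False using d[of m1 m] d[of m1 "Suc m"] lt l1 Suc(4) by auto
    qed
    have mm: "m = Suc m1"
    proof (rule ccontr)
      assume "m \<noteq> Suc m1"
      hence "P w ! Suc m1 = P w ! Suc m" using x1 x1b d[of "Suc m1" m] l1 Suc(4) by auto
      thus False using d[of "Suc m1" "Suc m"] lt l1 Suc(4) by auto
    qed
    have x2: "p ! Suc (Suc j) = P w ! Suc m" using Suc(5) ne12 x1 mm by (auto simp: doubleton_eq_iff)
    from IH' show ?case
    proof
      assume pure: "Suc j < length (P w1) \<and> (\<forall>l\<le>Suc j. p ! l = P w1 ! l)"
      hence "Suc j = Suc m1" using x1 d[of "Suc j" "Suc m1"] l1 by auto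
      hence "\<forall>l\<le>Suc (Suc j). p ! l = P w ! l" using pure x2 mm by (auto simp: le_Suc_eq)
      thus ?case using Suc(4) mm `Suc j = Suc m1` by auto
    next
      assume imp: "\<forall>k<length (P w1). p ! Suc j = P w1 ! k \<longrightarrow> k + D \<le> Suc j"
      hence "Suc m1 + D \<le> Suc j" using x1 w1(2) by auto
      moreover have "\<forall>k<length (P w). p ! Suc (Suc j) = P w ! k \<longrightarrow> k = Suc m"
        using x2 distP[OF Suc(3)] Suc(4) by auto
      ultimately show ?case using mm by auto
    qed
  next
    assume lt: "w1 < w"
    have "p ! Suc j = P w1 ! m1 \<or> p ! Suc j = P w1 ! Suc m1" using w1(3) by (auto simp: doubleton_eq_iff)
    then obtain k1 where k1': "k1 = m1 \<or> k1 = Suc m1" "p ! Suc j = P w1 ! k1" by blast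
    hence k1: "k1 < length (P w1)" "p ! Suc j = P w1 ! k1" using w1(2) by auto
    have "k1 \<noteq> 0"
    proof
      assume "k1 = 0" thus False using k1 ns start[OF w1(1)] by simp
    qed
    have "k1 \<le> Suc j" using IH'
    proof
      assume "Suc j < length (P w1) \<and> (\<forall>l\<le>Suc j. p ! l = P w1 ! l)"
      thus ?thesis using k1 distP[OF w1(1)] by auto
    next
      assume "\<forall>k<length (P w1). p ! Suc j = P w1 ! k \<longrightarrow> k + D \<le> Suc j"
      thus ?thesis using k1 by auto
    qed
    have "p ! Suc j = P w ! m \<or> p ! Suc j = P w ! Suc m" using Suc(5) by (auto simp: doubleton_eq_iff)
    then obtain k2 where k2: "k2 = m \<or> k2 = Suc m" "p ! Suc j = P w ! k2" by blast
    have "k2 + D \<le> k1" using key[OF lt Suc(3) k1(1), of k2] k2 Suc(4) k1(2) `k1 \<noteq> 0` by auto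
    have "p ! Suc (Suc j) = P w ! m \<or> p ! Suc (Suc j) = P w ! Suc m" using Suc(5) by (auto simp: doubleton_eq_iff)
    then obtain k3 where k3: "k3 = m \<or> k3 = Suc m" "p ! Suc (Suc j) = P w ! k3" by blast
    have "k3 \<noteq> k2" using k2 k3 ne12 by auto
    hence "k3 \<le> Suc k2" using k2 k3 by auto
    have "\<forall>k<length (P w). p ! Suc (Suc j) = P w ! k \<longrightarrow> k = k3"
      using k3 distP[OF Suc(3)] Suc(4) by auto
    thus ?case using `k3 \<le> Suc k2` `k2 + D \<le> k1` `k1 \<le> Suc j` by auto
  qed
qed


lemma final_path:
  assumes j: "j < W" and tp: "temporal_path H lam p" and HE: "H \<subseteq> EE"
    and hp: "hd p = s" and lp: "last p = last (P j)" and short: "length p < length (P j) + D"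
  shows "p = P j"
proof -
  have pn: "p \<noteq> []" using tp_nil[OF tp] .
  have p0: "p ! 0 = s" using hp pn by (simp add: hd_conv_nth)
  have lj: "2 \<le> length (P j)" using len[OF j] by simp
  have lastj: "last (P j) = P j ! (length (P j) - 1)" using Pne[OF j] by (simp add: last_conv_nth)
  have "P j ! (length (P j) - 1) \<noteq> P j ! 0" using distP[OF j, of "length (P j) - 1" 0] lj Pne[OF j] by simp
  hence ts: "last (P j) \<noteq> s" using lastj start[OF j] by simp
  have "length p \<noteq> 1"
  proof
    assume "length p = 1"
    hence "hd p = last p" using pn by (simp add: hd_conv_nth last_conv_nth)
    thus False using hp lp ts by simp
  qed
  moreover have "length p \<noteq> 0" using pn by simp
  ultimately have l2: "2 \<le> length p" by linarith
  define i where "i = length p - 2"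
  have si: "Suc i < length p" "Suc i = length p - 1" using l2 unfolding i_def by auto
  have lpi: "p ! Suc i = last (P j)" using lp pn si(2) by (simp add: last_conv_nth)
  have "{p ! i, p ! Suc i} \<in> EE" using tp_edge[OF tp si(1)] HE by blast
  then obtain w m where wm: "w < W" "Suc m < length (P w)" "{p ! i, p ! Suc i} = {P w ! m, P w ! Suc m}"
    unfolding EE_def by blast
  have "p ! Suc i \<in> set (P w)"
  proof -
    have "p ! Suc i \<in> {P w ! m, P w ! Suc m}" using wm(3) by blast
    thus ?thesis using wm(2) by auto
  qed
  hence "w = j" using tpriv[OF j wm(1)] lpi by auto
  note C = claim[OF tp HE p0 si(1) wm(1,2,3)]
  have lm: "length (P j) - 1 < length (P j)" using lj by linarith
  show ?thesis
  proof (cases "Suc i < length (P w) \<and> (\<forall>l\<le>Suc i. p ! l = P w ! l)")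
    case True
    have "P j ! Suc i = P j ! (length (P j) - 1)" using True lpi lastj `w = j` by auto
    moreover note lm
    ultimately have "Suc i = length (P j) - 1" using distP[OF j, of "Suc i" "length (P j) - 1"] True `w = j` by simp
    hence ll: "length p = length (P j)" using si lj by simp
    show ?thesis
    proof (rule nth_equalityI)
      show "length p = length (P j)" by (rule ll)
      fix l assume "l < length p"
      hence "l \<le> Suc i" using si by simp
      thus "p ! l = P j ! l" using True `w = j` by auto
    qed
  next
    case False
    hence "\<forall>k<length (P w). p ! Suc i = P w ! k \<longrightarrow> k + D \<le> Suc i" using C by blast
    hence imp': "\<forall>k<length (P j). p ! Suc i = P j ! k \<longrightarrow> k + D \<le> Suc i" using `w = j` by simp
    have "length (P j) - 1 + D \<le> Suc i" using imp'[rule_format, OF lm] lpi lastj by simp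
    thus ?thesis using short si by simp
  qed
qed

lemma Ptp: "w < W \<Longrightarrow> temporal_path EE lam (P w)"
  unfolding temporal_path_def
proof (intro conjI allI impI)
  assume w: "w < W"
  show "P w \<noteq> []" using Pne[OF w] .
  show "distinct (P w)" using dist[OF w] .
  fix i
  show "Suc i < length (P w) \<Longrightarrow> {P w ! i, P w ! Suc i} \<in> EE" using w unfolding EE_def by blast
next
  fix i assume w: "w < W" and "i + 2 < length (P w)"
  hence a: "Suc i < length (P w)" "Suc (Suc i) < length (P w)" by auto
  show "lam {P w ! i, P w ! Suc i} \<le> lam {P w ! Suc i, P w ! (i + 2)}"
    using lam_eq[OF w a(1)] lam_eq[OF w a(2)] by (simp add: numeral_2_eq_2)
qed

lemma EE_fin: "finite EE"
proof -
  have "EE = (\<lambda>(w,m). {P w ! m, P w ! Suc m}) ` (SIGMA w:{..<W}. {..<length (P w) - 1})"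
    unfolding EE_def by force
  thus ?thesis by simp
qed

lemma card_EE: "card EE = (\<Sum>w<W. length (P w) - 1)"
proof -
  have eq: "EE = (\<lambda>(w,m). {P w ! m, P w ! Suc m}) ` (SIGMA w:{..<W}. {..<length (P w) - 1})"
    unfolding EE_def by force
  have inj: "inj_on (\<lambda>(w,m). {P w ! m, P w ! Suc m}) (SIGMA w:{..<W}. {..<length (P w) - 1})"
  proof (rule inj_onI, clarify)
    fix w m w' m'
    assume a: "w < W" "m < length (P w) - 1" "w' < W" "m' < length (P w') - 1"
      and e: "{P w ! m, P w ! Suc m} = {P w' ! m', P w' ! Suc m'}"
    have "w*M+m+1 = w'*M+m'+1" using lam_eq[of w m] lam_eq[of w' m'] a e by simp
    moreover have "m < M" "m' < M" using len[OF a(1)] len[OF a(3)] a by auto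
    ultimately show "w = w' \<and> m = m'" using lex_le[of w M m w' m'] lex_le[of w' M m' w m] by auto
  qed
  show ?thesis unfolding eq card_image[OF inj] by simp
qed

lemma Inf_attained:
  fixes f :: "'a \<Rightarrow> enat"
  assumes "(INF x\<in>S. f x) = enat k"
  shows "\<exists>x\<in>S. f x = enat k"
proof -
  have "S \<noteq> {}" using assms by (auto simp: top_enat_def)
  hence "f ` S \<noteq> {}" by simp
  hence "(INF x\<in>S. f x) \<in> f ` S" unfolding Inf_enat_def by (auto intro: LeastI)
  thus ?thesis using assms by auto
qed

lemma main:
  assumes b0: "0 \<le> \<beta>" and bD: "\<beta> < real D"
  shows "temporal_graph n EE lam \<and> s < n \<and>
         (\<forall>H. additive_spanner n EE lam s \<beta> H \<longrightarrow> card EE \<le> card H)"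
proof (intro conjI allI impI)
  show "temporal_graph n EE lam"
    unfolding temporal_graph_def
  proof (intro conjI ballI)
    fix e assume "e \<in> EE"
    then obtain w m where wm: "w < W" "Suc m < length (P w)" "e = {P w ! m, P w ! Suc m}"
      unfolding EE_def by blast
    have "P w ! m \<noteq> P w ! Suc m" using distP[OF wm(1), of m "Suc m"] wm(2) by simp
    moreover have "P w ! m < n" using bound[OF wm(1)] nth_mem[OF Suc_lessD[OF wm(2)]] by auto
    moreover have "P w ! Suc m < n" using bound[OF wm(1)] nth_mem[OF wm(2)] by auto
    ultimately show "\<exists>u v. e = {u, v} \<and> u \<noteq> v \<and> u < n \<and> v < n" using wm(3) by blast
  next
    fix e show "0 < lam e" using lam_pos .
  qed
  show "s < n" using bound[OF Wpos] start[OF Wpos] Pne[OF Wpos] hd_in_set[OF Pne[OF Wpos]] by (auto simp: hd_conv_nth[symmetric])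
  fix H assume sp: "additive_spanner n EE lam s \<beta> H"
  hence HE: "H \<subseteq> EE" unfolding additive_spanner_def by blast
  have "EE \<subseteq> H"
  proof
    fix e assume "e \<in> EE"
    then obtain w m where wm: "w < W" "Suc m < length (P w)" "e = {P w ! m, P w ! Suc m}"
      unfolding EE_def by blast
    define t where "t = last (P w)"
    have tn: "t < n" using bound[OF wm(1)] last_in_set[OF Pne[OF wm(1)]] unfolding t_def by auto
    have hdP: "hd (P w) = s" using start[OF wm(1)] Pne[OF wm(1)] by (simp add: hd_conv_nth)
    have "P w \<in> {p. temporal_path EE lam p \<and> hd p = s \<and> last p = t}"
      using Ptp[OF wm(1)] hdP t_def by simp
    hence "tdist EE lam s t \<le> enat (length (P w) - 1)"
      unfolding tdist_def by (rule INF_lower2) simp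
    then obtain d where d: "tdist EE lam s t = enat d" "d \<le> length (P w) - 1"
      by (cases "tdist EE lam s t") auto
    from sp tn d(1) obtain k where k: "tdist H lam s t = enat k" "real k \<le> real d + \<beta>"
      unfolding additive_spanner_def by auto
    obtain p where p: "temporal_path H lam p" "hd p = s" "last p = t" "enat (length p - 1) = enat k"
      using Inf_attained[OF k(1)[unfolded tdist_def]] by auto
    have "real (length p - 1) < real (length (P w) - 1) + real D"
      using p(4) k(2) d(2) bD by auto
    hence "real (length p - 1) < real (length (P w) - 1 + D)" by simp
    hence "length p - 1 < length (P w) - 1 + D" by (simp only: of_nat_less_iff)
    moreover have "length p \<noteq> 0" using tp_nil[OF p(1)] by simp
    moreover have "2 \<le> length (P w)" using len[OF wm(1)] by simp
    ultimately have "length p < length (P w) + D" by linarith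
    hence "p = P w" using final_path[OF wm(1) p(1) HE p(2)] p(3) t_def by simp
    thus "e \<in> H" using tp_edge[OF p(1)] wm by simp
  qed
  thus "card EE \<le> card H" using HE EE_fin by (simp add: card_mono finite_subset)
qed
end


definition enc :: "nat \<Rightarrow> nat \<Rightarrow> nat" where "enc r x = 3*x + r"

lemma enc_eq [simp]: "r < 3 \<Longrightarrow> r' < 3 \<Longrightarrow> enc r x = enc r' y \<longleftrightarrow> r = r' \<and> x = y"
  unfolding enc_def by presburger

definition fv :: "nat \<Rightarrow> nat \<Rightarrow> nat \<Rightarrow> nat \<Rightarrow> nat" where
  "fv K D w k = (if k = 0 then enc 0 0 else if k = 2*K+1 then enc 0 (w+1)
     else if odd k then enc 1 (D*w + (k-1) div 2) else enc 2 ((D+2)*w + (k-2) div 2))"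

lemma fv_0: "fv K D w 0 = enc 0 0" by (simp add: fv_def)
lemma fv_last: "fv K D w (2*K+1) = enc 0 (w+1)" by (simp add: fv_def)
lemma fv_odd: "a < K \<Longrightarrow> fv K D w (2*a+1) = enc 1 (D*w + a)" by (simp add: fv_def)
lemma fv_even: "a < K \<Longrightarrow> fv K D w (2*a+2) = enc 2 ((D+2)*w + a)" by (simp add: fv_def)

lemma fv_last': "fv K D w (Suc (2*K)) = enc 0 (w+1)" by (simp add: fv_def)
lemma fv_odd': "a < K \<Longrightarrow> fv K D w (Suc (2*a)) = enc 1 (D*w + a)" by (simp add: fv_def)
lemma fv_even': "a < K \<Longrightarrow> fv K D w (Suc (Suc (2*a))) = enc 2 ((D+2)*w + a)" by (simp add: fv_def)
lemmas fvs = fv_0 fv_last fv_odd fv_even fv_last' fv_odd' fv_even'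

lemma k_cases:
  fixes k K :: nat
  assumes "k < 2*K+2"
  obtains "k = 0" | "k = 2*K+1" | a where "a < K" "k = 2*a+1" | a where "a < K" "k = 2*a+2"
proof -
  consider "k = 0" | "k = 2*K+1" | "odd k" "k \<noteq> 2*K+1" | "even k" "k \<noteq> 0" by blast
  thus ?thesis
  proof cases
    case 3
    then obtain a where "k = 2*a+1" by (metis oddE)
    moreover have "a < K" using 3 assms calculation by simp
    ultimately show ?thesis using that by blast
  next
    case 4
    then obtain b where "k = 2*b" by (metis evenE)
    moreover have "b \<noteq> 0" using 4 calculation by simp
    then obtain a where "b = Suc a" using not0_implies_Suc by blast
    ultimately have "k = 2*a+2" by simp
    moreover have "a < K" using 4 assms calculation by simp
    ultimately show ?thesis using that by blast
  qed (use that in blast)+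
qed

lemma fv_class:
  assumes "k < 2*K+2"
  shows "(k = 0 \<and> fv K D w k = enc 0 0) \<or> (k = 2*K+1 \<and> fv K D w k = enc 0 (w+1)) \<or>
         (\<exists>a<K. k = 2*a+1 \<and> fv K D w k = enc 1 (D*w+a)) \<or>
         (\<exists>a<K. k = 2*a+2 \<and> fv K D w k = enc 2 ((D+2)*w+a))"
  using assms
proof (cases rule: k_cases)
  case 1 thus ?thesis by (simp add: fv_0)
next
  case 2 thus ?thesis by (simp add: fvs)
next
  case (3 a) thus ?thesis using fv_odd[OF 3(1), of D w] by blast
next
  case (4 a) thus ?thesis using fv_even[OF 4(1), of D w] by blast
qed

lemma fv_key:
  assumes "w < w2" "i < 2*K+2" "i2 < 2*K+2" "fv K D w i = fv K D w2 i2" "i \<noteq> 0"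
  shows "i2 + D \<le> i"
proof -
  have m1: "D*w + D \<le> D*w2" using mult_le_mono2[of "w+1" w2 D] assms(1) by simp
  have m2: "(D+2)*w + (D+2) \<le> (D+2)*w2" using mult_le_mono2[of "w+1" w2 "D+2"] assms(1) by simp
  from fv_class[OF assms(2), of D w] fv_class[OF assms(3), of D w2] assms(4,5) m1 m2
  show ?thesis apply auto done
qed

lemma fv_inj:
  assumes "i < 2*K+2" "i2 < 2*K+2" "fv K D w i = fv K D w i2"
  shows "i = i2"
  using fv_class[OF assms(1), of D w] fv_class[OF assms(2), of D w] assms(3) by auto

lemma fv_tpriv:
  assumes "k < 2*K+2" "fv K D w' k = fv K D w (2*K+1)"
  shows "w' = w"
  using fv_class[OF assms(1), of D w'] assms(2) by (auto simp: fvs)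

lemma fv_class2:
  assumes "k < 2*K+2" "X = D*w"
  shows "(k = 0 \<and> fv K D w k = enc 0 0) \<or> (k = 2*K+1 \<and> fv K D w k = enc 0 (w+1)) \<or>
         (\<exists>a<K. k = 2*a+1 \<and> fv K D w k = enc 1 (X+a)) \<or>
         (\<exists>a<K. k = 2*a+2 \<and> fv K D w k = enc 2 (X+2*w+a))"
proof -
  have eq: "(D+2)*w = X + 2*w" using assms(2) by (simp add: algebra_simps)
  show ?thesis using fv_class[OF assms(1), of D w] unfolding eq assms(2)[symmetric] .
qed

lemma edge_class:
  assumes K: "1 \<le> K" and m: "Suc m < 2*K+2" and X: "X = D*w"
  shows "(m = 0 \<and> fv K D w m = enc 0 0 \<and> fv K D w (Suc m) = enc 1 X) \<or>
         (\<exists>a<K. m = 2*a+1 \<and> fv K D w m = enc 1 (X+a) \<and> fv K D w (Suc m) = enc 2 (X+2*w+a)) \<or>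
         (\<exists>a. a+1<K \<and> m = 2*a+2 \<and> fv K D w m = enc 2 (X+2*w+a) \<and> fv K D w (Suc m) = enc 1 (X+a+1)) \<or>
         (m = 2*K \<and> fv K D w m = enc 2 (X+2*w+(K-1)) \<and> fv K D w (Suc m) = enc 0 (w+1))"
proof -
  have eq: "(D+2)*w = X + 2*w" using X by (simp add: algebra_simps)
  have m1: "m < 2*K+2" using m by simp
  show ?thesis using m1
  proof (cases rule: k_cases)
    case 1
    have "fv K D w (Suc 0) = enc 1 X" using fv_odd'[of 0 K D w] K X by simp
    thus ?thesis using 1 fv_0 by simp
  next
    case 2 thus ?thesis using m by simp
  next
    case (3 a)
    have "fv K D w m = enc 1 (X+a)" using fv_odd[OF 3(1), of D w] 3 X by simp
    moreover have "fv K D w (Suc m) = enc 2 (X+2*w+a)" using fv_even[OF 3(1), of D w] 3 eq by simp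
    ultimately show ?thesis using 3 by blast
  next
    case (4 a)
    have v1: "fv K D w m = enc 2 (X+2*w+a)" using fv_even[OF 4(1), of D w] 4 eq by simp
    show ?thesis
    proof (cases "a+1 < K")
      case True
      have "fv K D w (Suc m) = enc 1 (X+a+1)" using fv_odd[OF True, of D w] 4 X by (simp add: algebra_simps)
      thus ?thesis using v1 4 True by blast
    next
      case False
      hence "a = K - 1" "m = 2*K" using 4 by auto
      moreover have "fv K D w (Suc m) = enc 0 (w+1)" using calculation fv_last[of K D w] by simp
      ultimately show ?thesis using v1 by simp
    qed
  qed
qed

lemma h2: "(X::nat) + a = Y + aa \<Longrightarrow> X + 2*w + a = Y + 2*w' + aa \<Longrightarrow> (w = w' \<Longrightarrow> X = Y) \<Longrightarrow> a = aa"
proof -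
  assume a1: "X + a = Y + aa" and a2: "X + 2*w + a = Y + 2*w' + aa" and a3: "w = w' \<Longrightarrow> X = Y"
  have "w = w'" using a1 a2 by linarith
  thus "a = aa" using a1 a3 by simp
qed
lemma h3: "(X::nat) + a = Suc (Y + aa) \<Longrightarrow> X + 2*w + a = Y + 2*w' + aa \<Longrightarrow> False"
  by presburger
lemma h3': "(X::nat) + 2*w + aa = Y + 2*w' + a \<Longrightarrow> Suc (X + aa) = Y + a \<Longrightarrow> False"
  by presburger

lemma fv_disj:
  assumes K: "1 \<le> K" and D: "1 \<le> D" and m: "Suc m < 2*K+2" and m': "Suc m' < 2*K+2"
    and e: "{fv K D w m, fv K D w (Suc m)} = {fv K D w' m', fv K D w' (Suc m')}"
  shows "w = w' \<and> m = m'"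
proof -
  obtain X Y where XY: "X = D*w" "Y = D*w'" by blast
  have "D*w = D*w' \<Longrightarrow> w = w'" using D by simp
  hence inj: "X = Y \<Longrightarrow> w = w'" using XY by simp
  have XYe: "w = w' \<Longrightarrow> X = Y" using XY by simp
  have mono: "w < w' \<Longrightarrow> X < Y" "w' < w \<Longrightarrow> Y < X" using XY D by auto
  note C1 = edge_class[OF K m XY(1)] and C2 = edge_class[OF K m' XY(2)]
  show ?thesis
    using C1 C2 e
    apply -
    apply (elim disjE exE conjE; simp add: doubleton_eq_iff; ((thin_tac "fv _ _ _ _ = _")+)?)
    using inj apply simp
    using XYe h2 apply blast
    using h3 apply blast
    using h3' apply blast
    using XYe h2 apply blast
    done
qed


lemma div_bound: "0 < (d::nat) \<Longrightarrow> n < (n div d + 1) * d"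
proof -
  assume d: "0 < d"
  have "n div d * d + n mod d = n" by (rule div_mult_mod_eq)
  moreover have "n mod d < d" using d by simp
  moreover have "(n div d + 1) * d = n div d * d + d" by simp
  ultimately show ?thesis by linarith
qed

definition PP :: "nat \<Rightarrow> nat \<Rightarrow> nat \<Rightarrow> nat list" where
  "PP K D w = map (fv K D w) [0..<2*K+2]"

lemma PP_len [simp]: "length (PP K D w) = 2*K+2" by (simp add: PP_def del: upt_Suc)
lemma PP_nth: "k < 2*K+2 \<Longrightarrow> PP K D w ! k = fv K D w k" by (simp add: PP_def del: upt_Suc)

definition labF :: "nat \<Rightarrow> nat \<Rightarrow> (nat \<Rightarrow> nat list) \<Rightarrow> nat set \<Rightarrow> nat" where
  "labF W M P e = (if \<exists>w m. w < W \<and> Suc m < length (P w) \<and> e = {P w ! m, P w ! Suc m}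
     then (let wm = (SOME wm. fst wm < W \<and> Suc (snd wm) < length (P (fst wm)) \<and>
                      e = {P (fst wm) ! snd wm, P (fst wm) ! Suc (snd wm)})
           in fst wm * M + snd wm + 1) else 1)"

lemma labF_pos: "0 < labF W M P e"
  unfolding labF_def Let_def by simp

lemma labF_eq:
  assumes uniq: "\<And>w m w' m'. w < W \<Longrightarrow> Suc m < length (P w) \<Longrightarrow> w' < W \<Longrightarrow> Suc m' < length (P w')
      \<Longrightarrow> {P w ! m, P w ! Suc m} = {P w' ! m', P w' ! Suc m'} \<Longrightarrow> w = w' \<and> m = m'"
    and w: "w < W" and m: "Suc m < length (P w)"
  shows "labF W M P {P w ! m, P w ! Suc m} = w*M+m+1"
proof -
  define Q where "Q = (\<lambda>wm. fst wm < W \<and> Suc (snd wm) < length (P (fst wm)) \<and>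
                      {P w ! m, P w ! Suc m} = {P (fst wm) ! snd wm, P (fst wm) ! Suc (snd wm)})"
  have ex: "\<exists>w' m'. w' < W \<and> Suc m' < length (P w') \<and> {P w ! m, P w ! Suc m} = {P w' ! m', P w' ! Suc m'}"
    using w m by blast
  have "Q (w, m)" unfolding Q_def using w m by simp
  hence "Q (SOME wm. Q wm)" by (rule someI)
  moreover obtain w' m' where wm: "(SOME wm. Q wm) = (w', m')" by (cases "SOME wm. Q wm")
  ultimately have "Q (w', m')" by simp
  hence "w = w' \<and> m = m'" unfolding Q_def using uniq[OF w m, of w' m'] by simp
  hence "fst (SOME wm. Q wm) = w \<and> snd (SOME wm. Q wm) = m" using wm by simp
  thus ?thesis using ex unfolding labF_def Q_def Let_def by simp
qed

lemma construct:
  fixes n D :: nat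
  assumes n: "12 \<le> n" and D: "1 \<le> D"
  defines "K \<equiv> n div 6" and "W \<equiv> n div (12*(D+2)) + 1"
  shows "fam n W (2*K+2) D 0 (PP K D) (labF W (2*K+2) (PP K D))"
proof -
  have K1: "1 \<le> K" using n unfolding K_def by simp
  define q where "q = n div (12*(D+2))"
  have Wq: "W = q + 1" unfolding W_def q_def by simp
  have q12: "q * (12*(D+2)) \<le> n" unfolding q_def by (rule div_times_less_eq_dividend)
  have K6: "K * 6 \<le> n" unfolding K_def by (rule div_times_less_eq_dividend)
  have bnd: "fv K D w k < n" if w: "w < W" and k: "k < 2*K+2" for w k
  proof -
    have wq: "w \<le> q" using w Wq by simp
    have m1: "(D+2)*w \<le> (D+2)*q" using wq by (rule mult_le_mono2)
    have m2: "D*w \<le> (D+2)*w" by (rule mult_le_mono1) simp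
    have r: "12*((D+2)*q) = q*(12*(D+2))" by (simp add: algebra_simps)
    have "36*q \<le> q * (12*(D+2))" using D by simp
    hence qn: "36*q \<le> n" using q12 by linarith
    show ?thesis using fv_class[OF k, of D w]
    proof (elim disjE exE conjE)
      assume "k = 0" "fv K D w k = enc 0 0" thus ?thesis using n by (simp add: enc_def)
    next
      assume "k = 2*K+1" "fv K D w k = enc 0 (w+1)"
      thus ?thesis using wq qn n by (simp add: enc_def)
    next
      fix a assume "a < K" "k = 2*a+1" "fv K D w k = enc 1 (D*w+a)"
      thus ?thesis using m1 m2 r q12 K6 by (simp add: enc_def)
    next
      fix a assume "a < K" "k = 2*a+2" "fv K D w k = enc 2 ((D+2)*w+a)"
      thus ?thesis using m1 r q12 K6 by (simp add: enc_def)
    qed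
  qed
  show ?thesis
  proof (unfold_locales)
    show "0 < W" unfolding W_def by simp
  next
    fix w show "2 \<le> length (PP K D w) \<and> length (PP K D w) \<le> 2*K+2" by simp
  next
    fix w show "PP K D w ! 0 = 0" by (simp add: PP_nth fv_0 enc_def)
  next
    fix w show "distinct (PP K D w)"
      unfolding distinct_conv_nth
    proof (intro allI impI)
      fix i j assume "i < length (PP K D w)" "j < length (PP K D w)" "i \<noteq> j"
      hence ij: "i < 2*K+2" "j < 2*K+2" by auto
      show "PP K D w ! i \<noteq> PP K D w ! j"
      proof
        assume "PP K D w ! i = PP K D w ! j"
        hence "fv K D w i = fv K D w j" using PP_nth[OF ij(1)] PP_nth[OF ij(2)] by simp
        hence "i = j" using fv_inj[OF ij] by blast
        thus False using `i \<noteq> j` by simp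
      qed
    qed
  next
    fix w assume "w < W"
    thus "set (PP K D w) \<subseteq> {..<n}" using bnd by (auto simp: PP_def)
  next
    fix w w' assume "w < W" "w' < W" "w \<noteq> w'"
    have l: "last (PP K D w) = fv K D w (2*K+1)"
      by (simp add: PP_def last_map)
    show "last (PP K D w) \<notin> set (PP K D w')"
    proof
      assume "last (PP K D w) \<in> set (PP K D w')"
      then obtain k where k: "k < length (PP K D w')" "PP K D w' ! k = last (PP K D w)"
        unfolding in_set_conv_nth by blast
      hence k2: "k < 2*K+2" by simp
      hence "fv K D w' k = fv K D w (2*K+1)" using k(2) l PP_nth[OF k2] by simp
      note this = k2 this
      hence "w' = w" by (rule fv_tpriv)
      thus False using `w \<noteq> w'` by simp
    qed
  next
    fix w w2 i i2 assume "w < w2" "w2 < W" "i < length (PP K D w)" "i2 < length (PP K D w2)"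
      "PP K D w ! i = PP K D w2 ! i2" "i \<noteq> 0"
    thus "i2 + D \<le> i" using fv_key[of w w2 i K i2 D] by (simp add: PP_nth)
  next
    fix w m assume "w < W" "Suc m < length (PP K D w)"
    thus "labF W (2*K+2) (PP K D) {PP K D w ! m, PP K D w ! Suc m} = w*(2*K+2)+m+1"
    proof (rule labF_eq[rotated])
      fix w m w' m' assume "w < W" "Suc m < length (PP K D w)" "w' < W" "Suc m' < length (PP K D w')"
        "{PP K D w ! m, PP K D w ! Suc m} = {PP K D w' ! m', PP K D w' ! Suc m'}"
      thus "w = w' \<and> m = m'" using fv_disj[OF K1 D, of m m' w w'] by (simp add: PP_nth)
    qed
  next
    fix e show "0 < labF W (2*K+2) (PP K D) e" by (rule labF_pos)
  qed
qed

theorem theorem13: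
  shows "\<exists>c::real > 0. \<exists>N::nat. \<forall>n \<ge> N. \<forall>\<beta>::real \<ge> 0.
           \<exists>E lam s. temporal_graph n E lam \<and> s < n \<and>
             (\<forall>H. additive_spanner n E lam s \<beta> H \<longrightarrow>
                  real (card H) \<ge> c * (real n)\<^sup>2 / (1 + \<beta>))"
proof (intro exI[of _ "1/216"] conjI allI impI exI[of _ 12])
  show "(0::real) < 1/216" by simp
  fix n :: nat and \<beta> :: real
  assume n: "12 \<le> n" and b: "0 \<le> \<beta>"
  define D where "D = nat \<lfloor>\<beta>\<rfloor> + 1"
  have D1: "1 \<le> D" unfolding D_def by simp
  have rD: "real D = of_int \<lfloor>\<beta>\<rfloor> + 1" unfolding D_def using b by simp
  have bD: "\<beta> < real D" using rD by linarith
  have Db: "real D \<le> 1 + \<beta>" using rD by linarith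
  define K where "K = n div 6"
  define W where "W = n div (12*(D+2)) + 1"
  interpret F: fam n W "2*K+2" D 0 "PP K D" "labF W (2*K+2) (PP K D)"
    using construct[OF n D1] unfolding K_def W_def by simp
  have M: "temporal_graph n F.EE (labF W (2*K+2) (PP K D)) \<and> 0 < n \<and>
         (\<forall>H. additive_spanner n F.EE (labF W (2*K+2) (PP K D)) 0 \<beta> H \<longrightarrow> card F.EE \<le> card H)"
    using F.main[OF b bD] .
  have cE: "card F.EE = W * (2*K+1)" using F.card_EE by simp
  have nW: "n < W * (12*(D+2))"
    unfolding W_def by (rule div_bound) simp
  have nK: "n \<le> 6 * (2*K+1)"
  proof -
    have "n div 6 * 6 + n mod 6 = n" by (rule div_mult_mod_eq)
    hence "K * 6 + n mod 6 = n" unfolding K_def .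
    moreover have "n mod 6 < 6" by simp
    moreover have "6 * (2*K+1) = 12*K + 6" by simp
    ultimately show ?thesis by linarith
  qed
  have "n \<le> W * (12*(D+2))" using nW by simp
  hence "real n \<le> real (W * (12*(D+2)))" by (simp only: of_nat_le_iff)
  hence r1: "real n \<le> real W * (12*(real D+2))" by (simp add: add.commute)
  have "real n \<le> real (6 * (2*K+1))" using nK by (simp only: of_nat_le_iff)
  hence r2: "real n \<le> 6 * real (2*K+1)" by simp
  have "(real n)^2 \<le> (real W * (12*(real D+2))) * (6 * real (2*K+1))"
    unfolding power2_eq_square by (rule mult_mono[OF r1 r2]) auto
  also have "\<dots> = 72 * (real D + 2) * (real W * real (2*K+1))" by (simp add: algebra_simps)
  also have "\<dots> \<le> 216 * (1+\<beta>) * (real W * real (2*K+1))"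
    by (rule mult_right_mono) (use Db D1 in auto)
  finally have key: "(real n)^2 \<le> 216 * (1+\<beta>) * (real W * real (2*K+1))" .
  show "\<exists>E lam s. temporal_graph n E lam \<and> s < n \<and>
             (\<forall>H. additive_spanner n E lam s \<beta> H \<longrightarrow> real (card H) \<ge> 1/216 * (real n)\<^sup>2 / (1 + \<beta>))"
  proof (intro exI conjI allI impI)
    show "temporal_graph n F.EE (labF W (2*K+2) (PP K D))" using M by blast
    show "0 < n" using n by simp
    fix H assume "additive_spanner n F.EE (labF W (2*K+2) (PP K D)) 0 \<beta> H"
    hence "card F.EE \<le> card H" using M by blast
    hence "W * (2*K+1) \<le> card H" using cE by simp
    hence "real (W * (2*K+1)) \<le> real (card H)" by (simp only: of_nat_le_iff)
    hence cH: "real W * real (2*K+1) \<le> real (card H)" by (simp only: of_nat_mult)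
    have "1/216 * (real n)^2 / (1+\<beta>) \<le> real W * real (2*K+1)"
      using key b by (simp add: field_simps)
    thus "1/216 * (real n)^2 / (1+\<beta>) \<le> real (card H)" using cH by linarith
  qed
qed

end
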